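(* Let $\lambda\in(1,\infty)\setminus\mathbb{N}$ and let $\phi$ be one of the functions $\phi(x)=1$, $1-x$, $1-x^2$, $(1-x^2)^2$, $(1-x^3)^3$, $(1-x^2)^3$, or $e^{-\xi x}$ with $\xi>0$. Then the scheme $S_{1,\mathbf{w}^\lambda}$ preserves monotonicity: for every bounded non-decreasing initial sequence $\mathbf{f}^0$, the limit function $S^\infty_{1,\mathbf{w}^\lambda}\mathbf{f}^0$ is non-decreasing.
   Context: Put $w^\lambda_m=\phi(|m|/\lambda)$ for $m\in\mathbb{Z}$, $|m|<\lambda$, and $M_i=\{m\in\mathbb{Z}: m\equiv i \pmod 2,\ |m|<\lambda\}$, $i\in\{0,1\}$. The scheme $S_{1,\mathbf{w}^\lambda}$ (weighted local polynomial regression scheme of degree 1, coinciding with degree 0) is \[ (S_{1,\mathbf{w}^\lambda}\mathbf{f})_{2j+i}=\frac{\sum_{m\in M_i} w^\lambda_m f_{j+(m+i)/2}}{\sum_{m\in M_i} w^\lambda_m},\qquad i\in\{0,1\},\ j\in\mathbb{Z}. \] It is uniformly convergent; $S^\infty\mathbf{f}^0$ denotes the continuous limit $F$ with $\lim_{k\to\infty}\sup_j|(S^k\mathbf{f}^0)_j-F(2^{-k}j)|=0$. *)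

theory Defs
  imports "HOL-Analysis.Analysis"
begin

definition lpr_weight :: "(real \<Rightarrow> real) \<Rightarrow> real \<Rightarrow> int \<Rightarrow> real" where
  "lpr_weight phi lam m = phi (real_of_int \<bar>m\<bar> / lam)"

definition lpr_index :: "real \<Rightarrow> int \<Rightarrow> int set" where
  "lpr_index lam i = {m::int. m mod 2 = i mod 2 \<and> real_of_int \<bar>m\<bar> < lam}"

text \<open>The scheme S_{1,w^lambda}: (S f)_{2j+i} for i in {0,1}; here n = 2j+i with
  j = n div 2, i = n mod 2; (m+i)/2 is an integer since m = i (mod 2).\<close>
definition lpr_scheme :: "(real \<Rightarrow> real) \<Rightarrow> real \<Rightarrow> (int \<Rightarrow> real) \<Rightarrow> (int \<Rightarrow> real)" where
  "lpr_scheme phi lam f n =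
     (let j = n div 2; i = n mod 2 in
        (\<Sum>m\<in>lpr_index lam i. lpr_weight phi lam m * f (j + (m + i) div 2))
        / (\<Sum>m\<in>lpr_index lam i. lpr_weight phi lam m))"

definition is_subdiv_limit :: "((int \<Rightarrow> real) \<Rightarrow> (int \<Rightarrow> real)) \<Rightarrow> (int \<Rightarrow> real) \<Rightarrow> (real \<Rightarrow> real) \<Rightarrow> bool" where
  "is_subdiv_limit S f F \<longleftrightarrow> continuous_on UNIV F \<and>
     (\<forall>\<epsilon>>0. \<exists>K. \<forall>k\<ge>K. \<forall>j::int. \<bar>(S ^^ k) f j - F (real_of_int j / 2 ^ k)\<bar> \<le> \<epsilon>)"

end

theory Submission
  imports Defs
begin


definition lcq :: "(real \<Rightarrow> real) \<Rightarrow> bool" where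
  "lcq C \<longleftrightarrow> (\<forall>a b c d. -1 < a \<longrightarrow> a < b \<longrightarrow> b \<le> c \<longrightarrow> c < d \<longrightarrow> d < 1 \<longrightarrow> b - a = d - c
      \<longrightarrow> C a * C d \<le> C b * C c)"

lemma lcq_concave:
  assumes conc: "\<And>s t al. -1 < s \<Longrightarrow> s < 1 \<Longrightarrow> -1 < t \<Longrightarrow> t < 1 \<Longrightarrow> 0 \<le> al \<Longrightarrow> al \<le> 1
      \<Longrightarrow> (1-al) * C s + al * C t \<le> C ((1-al) * s + al * t)"
    and pos: "\<And>s. -1 < s \<Longrightarrow> s < 1 \<Longrightarrow> 0 \<le> C s"
  shows "lcq C"
  unfolding lcq_def
proof (intro allI impI)
  fix a b c d :: real
  assume h: "-1 < a" "a < b" "b \<le> c" "c < d" "d < 1" "b - a = d - c"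
  define al where "al = (b - a) / (d - a)"
  have dpos: "d - a > 0" using h by simp
  have a0: "0 \<le> al" "al \<le> 1" using h dpos by (simp_all add: al_def)
  have eb: "b = (1-al) * a + al * d"
  proof -
    have "(1-al) * a + al * d = a + al * (d - a)" by (simp add: algebra_simps)
    also have "\<dots> = b" using dpos by (simp add: al_def)
    finally show ?thesis by simp
  qed
  have ec: "c = (1-(1-al)) * a + (1-al) * d"
  proof -
    have "(1-(1-al)) * a + (1-al) * d = d - al * (d - a)" by (simp add: algebra_simps)
    also have "\<dots> = c" using dpos h(6) by (simp add: al_def)
    finally show ?thesis by simp
  qed
  have Cb: "(1-al) * C a + al * C d \<le> C b" using conc[of a d al] h a0 eb by auto
  have Cc: "(1-(1-al)) * C a + (1-al) * C d \<le> C c" using conc[of a d "1-al"] h a0 ec by auto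
  have A: "0 \<le> C a" "0 \<le> C d" using pos h by auto
  have l1: "0 \<le> (1-al) * C a + al * C d" using A a0 by simp
  have l2: "0 \<le> (1-(1-al)) * C a + (1-al) * C d" using A a0 by simp
  have "C a * C d \<le> ((1-al) * C a + al * C d) * ((1-(1-al)) * C a + (1-al) * C d)"
  proof -
    have "((1-al) * C a + al * C d) * ((1-(1-al)) * C a + (1-al) * C d) - C a * C d
       = al * (1-al) * (C a - C d)^2" by (simp add: algebra_simps power2_eq_square)
    moreover have "0 \<le> al * (1-al) * (C a - C d)^2" using a0 by simp
    ultimately show ?thesis by linarith
  qed
  also have "\<dots> \<le> C b * C c" using Cb Cc l1 l2 by (intro mult_mono) auto
  finally show "C a * C d \<le> C b * C c" .
qed

lemma lcq_pow:
  assumes "lcq C" and pos: "\<And>s. -1 < s \<Longrightarrow> s < 1 \<Longrightarrow> 0 \<le> C s"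
  shows "lcq (\<lambda>s. C s ^ n)"
  unfolding lcq_def
proof (intro allI impI)
  fix a b c d :: real
  assume h: "-1 < a" "a < b" "b \<le> c" "c < d" "d < 1" "b - a = d - c"
  have "C a * C d \<le> C b * C c" using assms(1) h unfolding lcq_def by blast
  moreover have "0 \<le> C a * C d" using pos h by simp
  ultimately have "(C a * C d)^n \<le> (C b * C c)^n" by (rule power_mono)
  then show "C a ^ n * C d ^ n \<le> C b ^ n * C c ^ n" by (simp add: power_mult_distrib)
qed

lemma lcq_exp:
  assumes "\<xi> > 0"
  shows "lcq (\<lambda>s. exp (- \<xi> * \<bar>s\<bar>))"
  unfolding lcq_def
proof (intro allI impI)
  fix a b c d :: real
  assume h: "-1 < a" "a < b" "b \<le> c" "c < d" "d < 1" "b - a = d - c"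
  have "\<bar>b\<bar> + \<bar>c\<bar> \<le> \<bar>a\<bar> + \<bar>d\<bar>" using h by (auto simp: abs_if)
  then have "- \<xi> * \<bar>a\<bar> + - \<xi> * \<bar>d\<bar> \<le> - \<xi> * \<bar>b\<bar> + - \<xi> * \<bar>c\<bar>" using assms
  proof -
    have "\<xi> * (\<bar>b\<bar> + \<bar>c\<bar>) \<le> \<xi> * (\<bar>a\<bar> + \<bar>d\<bar>)" using assms \<open>\<bar>b\<bar> + \<bar>c\<bar> \<le> \<bar>a\<bar> + \<bar>d\<bar>\<close> by simp
    then show ?thesis by (simp add: algebra_simps)
  qed
  then show "exp (- \<xi> * \<bar>a\<bar>) * exp (- \<xi> * \<bar>d\<bar>) \<le> exp (- \<xi> * \<bar>b\<bar>) * exp (- \<xi> * \<bar>c\<bar>)"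
    by (simp add: exp_add[symmetric])
qed

lemma conc_abs: "0 \<le> (al::real) \<Longrightarrow> al \<le> 1 \<Longrightarrow> \<bar>(1-al) * s + al * t\<bar> \<le> (1-al)*\<bar>s\<bar> + al*\<bar>t\<bar>"
proof -
  assume "0 \<le> al" "al \<le> 1"
  have "\<bar>(1-al) * s + al * t\<bar> \<le> \<bar>(1-al) * s\<bar> + \<bar>al * t\<bar>" by (rule abs_triangle_ineq)
  then show ?thesis using \<open>0 \<le> al\<close> \<open>al \<le> 1\<close> by (simp add: abs_mult)
qed

lemma cube_conv:
  fixes p q al :: real
  assumes "0 \<le> p" "0 \<le> q" "0 \<le> al" "al \<le> 1"
  shows "((1-al)*p + al*q)^3 \<le> (1-al)*p^3 + al*q^3"
proof -
  have "(1-al)*p^3 + al*q^3 - ((1-al)*p + al*q)^3 = al*(1-al)*(p-q)^2*((2-al)*p + (1+al)*q)"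
    by (simp add: algebra_simps power2_eq_square power3_eq_cube)
  moreover have "0 \<le> al*(1-al)*(p-q)^2*((2-al)*p + (1+al)*q)" using assms by simp
  ultimately show ?thesis by linarith
qed

lemma sq_conv:
  fixes s t al :: real
  assumes "0 \<le> al" "al \<le> 1"
  shows "((1-al) * s + al * t)^2 \<le> (1-al) * s^2 + al * t^2"
proof -
  have "(1-al) * s^2 + al * t^2 - ((1-al) * s + al * t)^2 = al*(1-al)*(s-t)^2"
    by (simp add: algebra_simps power2_eq_square)
  moreover have "0 \<le> al*(1-al)*(s-t)^2" using assms by simp
  ultimately show ?thesis by linarith
qed

lemma lcq_1: "lcq (\<lambda>s. 1)" by (simp add: lcq_def)

lemma lcq_lin: "lcq (\<lambda>s. 1 - \<bar>s\<bar>)"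
proof (rule lcq_concave)
  fix s t al :: real assume "0 \<le> al" "al \<le> 1"
  then show "(1-al) * (1 - \<bar>s\<bar>) + al * (1 - \<bar>t\<bar>) \<le> 1 - \<bar>(1-al) * s + al * t\<bar>"
    using conc_abs[of al s t] by (simp add: algebra_simps)
qed simp

lemma lcq_sq: "lcq (\<lambda>s. 1 - \<bar>s\<bar>^2)"
proof (rule lcq_concave)
  fix s t al :: real assume "0 \<le> al" "al \<le> 1"
  then show "(1-al) * (1 - \<bar>s\<bar>^2) + al * (1 - \<bar>t\<bar>^2) \<le> 1 - \<bar>(1-al) * s + al * t\<bar>^2"
    using sq_conv[of al s t] by (simp add: algebra_simps)
next
  fix s :: real assume "-1 < s" "s < 1"
  then have "\<bar>s\<bar> < 1" by simp
  then have "\<bar>s\<bar>^2 \<le> 1" by (simp add: abs_square_le_1)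
  then show "0 \<le> 1 - \<bar>s\<bar>^2" by simp
qed

lemma lcq_cube: "lcq (\<lambda>s. 1 - \<bar>s\<bar>^3)"
proof (rule lcq_concave)
  fix s t al :: real assume a: "0 \<le> al" "al \<le> 1"
  have "\<bar>(1-al) * s + al * t\<bar>^3 \<le> ((1-al)*\<bar>s\<bar> + al*\<bar>t\<bar>)^3"
    by (rule power_mono[OF conc_abs[OF a]]) simp
  also have "\<dots> \<le> (1-al)*\<bar>s\<bar>^3 + al*\<bar>t\<bar>^3" using cube_conv a by simp
  finally show "(1-al) * (1 - \<bar>s\<bar>^3) + al * (1 - \<bar>t\<bar>^3) \<le> 1 - \<bar>(1-al) * s + al * t\<bar>^3"
    by (simp add: algebra_simps)
next
  fix s :: real assume "-1 < s" "s < 1"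
  then have "\<bar>s\<bar> < 1" by simp
  then have "\<bar>s\<bar>^3 \<le> 1" by (simp add: power_le_one)
  then show "0 \<le> 1 - \<bar>s\<bar>^3" by simp
qed



definition good :: "(real \<Rightarrow> real) \<Rightarrow> bool" where
  "good phi \<longleftrightarrow> (\<forall>t. 0 \<le> t \<longrightarrow> t < 1 \<longrightarrow> 0 < phi t) \<and> lcq (\<lambda>s. phi \<bar>s\<bar>)"

lemma sq_lt1: "0 \<le> (t::real) \<Longrightarrow> t < 1 \<Longrightarrow> t^n < 1 \<or> n = 0"
  by (metis power_strict_mono power_one zero_less_iff_neq_zero)

lemma pos_sq: "-1 < (s::real) \<Longrightarrow> s < 1 \<Longrightarrow> 0 \<le> 1 - \<bar>s\<bar>^2"
  by (simp add: abs_square_le_1)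

lemma pos_cube: "-1 < (s::real) \<Longrightarrow> s < 1 \<Longrightarrow> 0 \<le> 1 - \<bar>s\<bar>^3"
  by (simp add: power_le_one)

lemma good_phi:
  assumes phi: "phi = (\<lambda>x. 1) \<or> phi = (\<lambda>x. 1 - x) \<or> phi = (\<lambda>x. 1 - x ^ 2)
      \<or> phi = (\<lambda>x. (1 - x ^ 2) ^ 2) \<or> phi = (\<lambda>x. (1 - x ^ 3) ^ 3)
      \<or> phi = (\<lambda>x. (1 - x ^ 2) ^ 3) \<or> (\<exists>\<xi>>0. phi = (\<lambda>x. exp (- \<xi> * x)))"
  shows "good phi"
proof -
  have s2: "t^2 < 1" if "0 \<le> t" "t < 1" for t :: real using sq_lt1[OF that, of 2] by simp
  have s3: "t^3 < 1" if "0 \<le> t" "t < 1" for t :: real using sq_lt1[OF that, of 3] by simp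
  from phi show ?thesis
  proof (elim disjE exE conjE)
    assume "phi = (\<lambda>x. 1)" then show ?thesis by (simp add: good_def lcq_1)
  next
    assume "phi = (\<lambda>x. 1 - x)" then show ?thesis by (simp add: good_def lcq_lin)
  next
    assume "phi = (\<lambda>x. 1 - x ^ 2)" then show ?thesis using s2 lcq_sq by (simp add: good_def)
  next
    assume e: "phi = (\<lambda>x. (1 - x ^ 2) ^ 2)"
    have "\<forall>t::real. 0 \<le> t \<longrightarrow> t < 1 \<longrightarrow> 0 < (1 - t^2)^2"
    proof (intro allI impI)
      fix t :: real assume "0 \<le> t" "t < 1"
      then have "t^2 < 1" by (rule s2)
      then show "0 < (1 - t^2)^2" by simp
    qed
    then show ?thesis using e lcq_pow[OF lcq_sq pos_sq, of 2] by (simp add: good_def)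
  next
    assume "phi = (\<lambda>x. (1 - x ^ 3) ^ 3)" then show ?thesis
      using s3 lcq_pow[OF lcq_cube pos_cube, of 3] by (simp add: good_def)
  next
    assume "phi = (\<lambda>x. (1 - x ^ 2) ^ 3)" then show ?thesis
      using s2 lcq_pow[OF lcq_sq pos_sq, of 3] by (simp add: good_def)
  next
    fix \<xi> :: real assume "\<xi> > 0" "phi = (\<lambda>x. exp (- \<xi> * x))"
    then show ?thesis using lcq_exp[of \<xi>] by (simp add: good_def)
  qed
qed

definition wz :: "(real \<Rightarrow> real) \<Rightarrow> real \<Rightarrow> int \<Rightarrow> real" where
  "wz phi lam m = (if real_of_int \<bar>m\<bar> < lam then phi (real_of_int \<bar>m\<bar> / lam) else 0)"

lemma wz_nonneg: "good phi \<Longrightarrow> lam > 0 \<Longrightarrow> 0 \<le> wz phi lam m"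
  unfolding wz_def good_def by (auto intro: less_imp_le)

lemma wz_pos: "good phi \<Longrightarrow> lam > 0 \<Longrightarrow> real_of_int \<bar>m\<bar> < lam \<Longrightarrow> 0 < wz phi lam m"
  unfolding wz_def good_def by auto

lemma LCZ:
  assumes g: "good phi" and lam: "lam > 0" and xy: "x < y" and e: "x' = x + 1" "y' = y + 1"
  shows "wz phi lam x * wz phi lam y' \<le> wz phi lam x' * wz phi lam y"
proof (cases "real_of_int \<bar>x\<bar> < lam \<and> real_of_int \<bar>y'\<bar> < lam")
  case True
  have bx: "- lam < real_of_int x" "real_of_int x < lam" using True by auto
  have by': "- lam < real_of_int y'" "real_of_int y' < lam" using True by auto
  have o: "real_of_int x < real_of_int x'" "real_of_int x' \<le> real_of_int y" "real_of_int y < real_of_int y'"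
    "real_of_int x' - real_of_int x = real_of_int y' - real_of_int y" using xy e by auto
  have L: "lcq (\<lambda>s. phi \<bar>s\<bar>)" using g by (simp add: good_def)
  have "phi \<bar>x / lam\<bar> * phi \<bar>y' / lam\<bar> \<le> phi \<bar>x' / lam\<bar> * phi \<bar>y / lam\<bar>"
    using L unfolding lcq_def
  proof (elim allE impE)
    show "-1 < x / lam" using bx lam by (simp add: less_divide_eq)
    show "x / lam < x' / lam" using o lam by (simp add: divide_strict_right_mono)
    show "x' / lam \<le> y / lam" using o lam by (simp add: divide_right_mono)
    show "y / lam < y' / lam" using o lam by (simp add: divide_strict_right_mono)
    show "y' / lam < 1" using by' lam by (simp add: divide_less_eq)
    show "x' / lam - x / lam = y' / lam - y / lam" using o by (simp add: diff_divide_distrib[symmetric])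
  qed
  moreover have "real_of_int \<bar>x'\<bar> < lam" "real_of_int \<bar>y\<bar> < lam" using bx by' o by auto
  ultimately show ?thesis using True lam by (simp add: wz_def abs_divide)
next
  case False
  then have "wz phi lam x * wz phi lam y' = 0" by (auto simp: wz_def)
  moreover have "0 \<le> wz phi lam x' * wz phi lam y" using wz_nonneg[OF g lam, of x'] wz_nonneg[OF g lam, of y] by simp
  ultimately show ?thesis by linarith
qed

lemma avg:
  fixes P Q :: "int \<Rightarrow> real" and g :: "int \<Rightarrow> real"
  assumes T: "finite T" and P: "\<And>k. k \<in> T \<Longrightarrow> 0 \<le> P k" and Q: "\<And>k. k \<in> T \<Longrightarrow> 0 \<le> Q k"
    and sP: "0 < sum P T" and sQ: "0 < sum Q T"
    and LR: "\<And>k l. k \<in> T \<Longrightarrow> l \<in> T \<Longrightarrow> k < l \<Longrightarrow> P l * Q k \<le> P k * Q l"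
    and g: "mono g"
  shows "(\<Sum>k\<in>T. P k * g k) / sum P T \<le> (\<Sum>k\<in>T. Q k * g k) / sum Q T"
proof -
  define D where "D = (\<Sum>k\<in>T. \<Sum>l\<in>T. P k * Q l * (g l - g k))"
  have D1: "D = (\<Sum>k\<in>T. Q k * g k) * sum P T - (\<Sum>k\<in>T. P k * g k) * sum Q T"
  proof -
    have "D = (\<Sum>k\<in>T. \<Sum>l\<in>T. P k * (Q l * g l)) - (\<Sum>k\<in>T. \<Sum>l\<in>T. (P k * g k) * Q l)"
      unfolding D_def by (simp add: right_diff_distrib sum_subtractf algebra_simps)
    also have "(\<Sum>k\<in>T. \<Sum>l\<in>T. P k * (Q l * g l)) = sum P T * (\<Sum>l\<in>T. Q l * g l)"
      by (simp add: sum_distrib_left[symmetric] sum_distrib_right[symmetric])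
    also have "(\<Sum>k\<in>T. \<Sum>l\<in>T. (P k * g k) * Q l) = (\<Sum>k\<in>T. P k * g k) * sum Q T"
      by (simp add: sum_distrib_left[symmetric] sum_distrib_right[symmetric])
    finally show ?thesis by simp
  qed
  have D2: "D = (\<Sum>k\<in>T. \<Sum>l\<in>T. P l * Q k * (g k - g l))"
    unfolding D_def by (rule sum.swap)
  have "2 * D = (\<Sum>k\<in>T. \<Sum>l\<in>T. (P k * Q l - P l * Q k) * (g l - g k))"
  proof -
    have "2 * D = D + D" by simp
    also have "\<dots> = (\<Sum>k\<in>T. \<Sum>l\<in>T. P k * Q l * (g l - g k)) + (\<Sum>k\<in>T. \<Sum>l\<in>T. P l * Q k * (g k - g l))"
      using D2 D_def by simp
    also have "\<dots> = (\<Sum>k\<in>T. \<Sum>l\<in>T. (P k * Q l - P l * Q k) * (g l - g k))"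
      by (simp add: sum.distrib[symmetric] algebra_simps)
    finally show ?thesis .
  qed
  moreover have "0 \<le> (\<Sum>k\<in>T. \<Sum>l\<in>T. (P k * Q l - P l * Q k) * (g l - g k))"
  proof (intro sum_nonneg)
    fix k l assume kl: "k \<in> T" "l \<in> T"
    consider "k < l" | "k = l" | "l < k" by linarith
    then show "0 \<le> (P k * Q l - P l * Q k) * (g l - g k)"
    proof cases
      case 1
      then show ?thesis using LR[OF kl 1] g[unfolded mono_def, rule_format, of k l] by simp
    next
      case 2 then show ?thesis by simp
    next
      case 3
      then have "P k * Q l - P l * Q k \<le> 0" "g l - g k \<le> 0"
        using LR[of l k] kl g[unfolded mono_def, rule_format, of l k] by auto
      then show ?thesis by (simp add: mult_nonpos_nonpos)
    qed
  qed
  ultimately have "0 \<le> D" by simp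
  then have "(\<Sum>k\<in>T. P k * g k) * sum Q T \<le> (\<Sum>k\<in>T. Q k * g k) * sum P T" using D1 by simp
  then show ?thesis using sP sQ by (simp add: divide_le_eq le_divide_eq field_simps)
qed



lemma reindex:
  assumes i: "i = 0 \<or> i = 1" and T: "finite T"
    and sub: "\<And>k. real_of_int \<bar>2 * k - i - 2 * s\<bar> < lam \<Longrightarrow> k \<in> T"
  shows "(\<Sum>m\<in>lpr_index lam i. lpr_weight phi lam m * g (s + (m + i) div 2))
       = (\<Sum>k\<in>T. wz phi lam (2 * k - i - 2 * s) * g k)"
proof -
  have "(\<Sum>k\<in>T. wz phi lam (2 * k - i - 2 * s) * g k)
      = (\<Sum>k\<in>{k\<in>T. real_of_int \<bar>2 * k - i - 2 * s\<bar> < lam}. lpr_weight phi lam (2 * k - i - 2 * s) * g k)"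
    unfolding sum.inter_filter[OF T] by (rule sum.cong) (auto simp: wz_def lpr_weight_def)
  also have "\<dots> = (\<Sum>m\<in>lpr_index lam i. lpr_weight phi lam m * g (s + (m + i) div 2))"
  proof (rule sum.reindex_bij_witness[where i = "\<lambda>m. s + (m + i) div 2" and j = "\<lambda>k. 2 * k - i - 2 * s"])
    fix k assume k: "k \<in> {k\<in>T. real_of_int \<bar>2 * k - i - 2 * s\<bar> < lam}"
    show "s + (2 * k - i - 2 * s + i) div 2 = k" by simp
    have "(2 * k - i - 2 * s) mod 2 = i mod 2" using i by presburger
    then show "2 * k - i - 2 * s \<in> lpr_index lam i" using k i unfolding lpr_index_def by auto
    show "lpr_weight phi lam (2 * k - i - 2 * s) * g (s + (2 * k - i - 2 * s + i) div 2) = lpr_weight phi lam (2 * k - i - 2 * s) * g k"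
      by simp
  next
    fix m assume m: "m \<in> lpr_index lam i"
    then have mm: "m mod 2 = i mod 2" and ml: "real_of_int \<bar>m\<bar> < lam" by (auto simp: lpr_index_def)
    have e: "2 * (s + (m + i) div 2) - i - 2 * s = m" using mm i by presburger
    show "2 * (s + (m + i) div 2) - i - 2 * s = m" by (rule e)
    show "s + (m + i) div 2 \<in> {k\<in>T. real_of_int \<bar>2 * k - i - 2 * s\<bar> < lam}"
      using e ml sub[of "s + (m + i) div 2"] by simp
  qed
  finally show ?thesis by simp
qed

lemma scheme_form:
  assumes i: "i = 0 \<or> i = 1" and T: "finite T"
    and sub: "\<And>k. real_of_int \<bar>2 * k - i - 2 * s\<bar> < lam \<Longrightarrow> k \<in> T"
  shows "lpr_scheme phi lam f (2 * s + i) = (\<Sum>k\<in>T. wz phi lam (2 * k - i - 2 * s) * f k) / (\<Sum>k\<in>T. wz phi lam (2 * k - i - 2 * s))"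
proof -
  have d: "(2 * s + i) div 2 = s" "(2 * s + i) mod 2 = i" using i by auto
  have "(\<Sum>m\<in>lpr_index lam i. lpr_weight phi lam m) = (\<Sum>m\<in>lpr_index lam i. lpr_weight phi lam m * (\<lambda>_. 1) (s + (m + i) div 2))"
    by simp
  also have "\<dots> = (\<Sum>k\<in>T. wz phi lam (2 * k - i - 2 * s) * (\<lambda>_. 1) k)" by (rule reindex[OF i T sub])
  finally have den: "(\<Sum>m\<in>lpr_index lam i. lpr_weight phi lam m) = (\<Sum>k\<in>T. wz phi lam (2 * k - i - 2 * s))" by simp
  show ?thesis unfolding lpr_scheme_def Let_def d den using reindex[OF i T sub, where phi=phi and g=f] by simp
qed

lemma sum_wz_pos:
  assumes g: "good phi" and lam: "lam > 1" and T: "finite T" and i: "i = 0 \<or> i = 1"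
    and sub: "\<And>k. real_of_int \<bar>2 * k - i - 2 * s\<bar> < lam \<Longrightarrow> k \<in> T"
  shows "0 < (\<Sum>k\<in>T. wz phi lam (2 * k - i - 2 * s))"
proof -
  have e: "2 * (s+i) - i - 2 * s = i" by simp
  have iT: "s + i \<in> T" using sub[of "s+i"] e i lam by auto
  have p: "0 < wz phi lam (2 * (s+i) - i - 2 * s)" unfolding e using i lam by (intro wz_pos[OF g]) auto
  have "wz phi lam (2 * (s+i) - i - 2 * s) \<le> (\<Sum>k\<in>T. wz phi lam (2 * k - i - 2 * s))"
    by (rule member_le_sum[OF iT]) (use wz_nonneg[OF g] lam T in auto)
  with p show ?thesis by linarith
qed

lemma step_le:
  assumes g: "good phi" and lam: "lam > 1" and f: "mono f"
  shows "lpr_scheme phi lam f n \<le> lpr_scheme phi lam f (n + 1)"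
proof -
  define R where "R = ceiling lam + 2"
  define s where "s = n div 2"
  define T where "T = {s - R .. s + R}"
  have T: "finite T" by (simp add: T_def)
  have sub: "k \<in> T" if "real_of_int \<bar>2 * k - i - 2 * s'\<bar> < lam" "i = 0 \<or> i = 1" "s' = s \<or> s' = s + 1" for k i s'
  proof -
    have "real_of_int \<bar>2 * k - i - 2 * s'\<bar> < real_of_int (ceiling lam)"
      using that(1) le_of_int_ceiling[of lam] by linarith
    then have "\<bar>2 * k - i - 2 * s'\<bar> < ceiling lam" by linarith
    then show ?thesis using that(2,3) unfolding T_def R_def by auto
  qed
  have lp: "lam > 0" using lam by simp
  have i0: "(0::int) = 0 \<or> (0::int) = 1" and i1: "(1::int) = 0 \<or> (1::int) = 1" by simp_all
  have wn: "\<And>m. 0 \<le> wz phi lam m" using wz_nonneg[OF g lp] .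
  have "n mod 2 = 0 \<or> n mod 2 = 1" by presburger
  then show ?thesis
  proof
    assume "n mod 2 = 0"
    then have n1: "n = 2 * s + 0" and n2: "n + 1 = 2 * s + 1" unfolding s_def by presburger+
    have s0: "\<And>k. real_of_int \<bar>2 * k - 0 - 2 * s\<bar> < lam \<Longrightarrow> k \<in> T" using sub by blast
    have s1: "\<And>k. real_of_int \<bar>2 * k - 1 - 2 * s\<bar> < lam \<Longrightarrow> k \<in> T" using sub by blast
    have e0: "lpr_scheme phi lam f (2 * s + 0) = (\<Sum>k\<in>T. wz phi lam (2 * k - 0 - 2 * s) * f k) / (\<Sum>k\<in>T. wz phi lam (2 * k - 0 - 2 * s))"
      by (rule scheme_form[OF i0 T]) (use s0 in auto)
    have e1: "lpr_scheme phi lam f (2 * s + 1) = (\<Sum>k\<in>T. wz phi lam (2 * k - 1 - 2 * s) * f k) / (\<Sum>k\<in>T. wz phi lam (2 * k - 1 - 2 * s))"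
      by (rule scheme_form[OF i1 T]) (use s1 in auto)
    have "lpr_scheme phi lam f (2 * s + 0) \<le> lpr_scheme phi lam f (2 * s + 1)"
      unfolding e0 e1
    proof (rule avg[OF T])
      show "0 < (\<Sum>k\<in>T. wz phi lam (2 * k - 0 - 2 * s))" by (rule sum_wz_pos[OF g lam T _ s0]) simp
      show "0 < (\<Sum>k\<in>T. wz phi lam (2 * k - 1 - 2 * s))" by (rule sum_wz_pos[OF g lam T _ s1]) simp
      fix k l assume "k \<in> T" "l \<in> T" "k < l"
      then show "wz phi lam (2 * l - 0 - 2 * s) * wz phi lam (2 * k - 1 - 2 * s) \<le> wz phi lam (2 * k - 0 - 2 * s) * wz phi lam (2 * l - 1 - 2 * s)"
        using LCZ[OF g lp, of "2 * k - 1 - 2 * s" "2 * l - 1 - 2 * s" "2 * k - 0 - 2 * s" "2 * l - 0 - 2 * s"]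
        by (simp add: mult.commute)
    qed (use wn f in auto)
    then show ?thesis using n1 n2 by simp
  next
    assume "n mod 2 = 1"
    then have n1: "n = 2 * s + 1" and n2: "n + 1 = 2 * (s+1) + 0" unfolding s_def by presburger+
    have s0: "\<And>k. real_of_int \<bar>2 * k - 0 - 2 * (s+1)\<bar> < lam \<Longrightarrow> k \<in> T" using sub by blast
    have s1: "\<And>k. real_of_int \<bar>2 * k - 1 - 2 * s\<bar> < lam \<Longrightarrow> k \<in> T" using sub by blast
    have e0: "lpr_scheme phi lam f (2 * (s+1) + 0) = (\<Sum>k\<in>T. wz phi lam (2 * k - 0 - 2 * (s+1)) * f k) / (\<Sum>k\<in>T. wz phi lam (2 * k - 0 - 2 * (s+1)))"
      by (rule scheme_form[OF i0 T]) (use s0 in auto)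
    have e1: "lpr_scheme phi lam f (2 * s + 1) = (\<Sum>k\<in>T. wz phi lam (2 * k - 1 - 2 * s) * f k) / (\<Sum>k\<in>T. wz phi lam (2 * k - 1 - 2 * s))"
      by (rule scheme_form[OF i1 T]) (use s1 in auto)
    have "lpr_scheme phi lam f (2 * s + 1) \<le> lpr_scheme phi lam f (2 * (s+1) + 0)"
      unfolding e0 e1
    proof (rule avg[OF T])
      show "0 < (\<Sum>k\<in>T. wz phi lam (2 * k - 0 - 2 * (s+1)))" by (rule sum_wz_pos[OF g lam T _ s0]) simp
      show "0 < (\<Sum>k\<in>T. wz phi lam (2 * k - 1 - 2 * s))" by (rule sum_wz_pos[OF g lam T _ s1]) simp
      fix k l assume "k \<in> T" "l \<in> T" "k < l"
      then show "wz phi lam (2 * l - 1 - 2 * s) * wz phi lam (2 * k - 0 - 2 * (s+1)) \<le> wz phi lam (2 * k - 1 - 2 * s) * wz phi lam (2 * l - 0 - 2 * (s+1))"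
        using LCZ[OF g lp, of "2 * k - 0 - 2 * (s+1)" "2 * l - 0 - 2 * (s+1)" "2 * k - 1 - 2 * s" "2 * l - 1 - 2 * s"]
        by (simp add: mult.commute algebra_simps)
    qed (use wn f in auto)
    then show ?thesis by (subst n2, subst n1, assumption)
  qed
qed

lemma mono_int_step:
  fixes h :: "int \<Rightarrow> real"
  assumes "\<And>n. h n \<le> h (n + 1)"
  shows "mono h"
proof (rule monoI)
  fix x y :: int assume "x \<le> y"
  then show "h x \<le> h y"
  proof (induction y rule: int_ge_induct)
    case base then show ?case by simp
  next
    case (step i) then show ?case using assms[of i] by linarith
  qed
qed

lemma iter_mono:
  assumes g: "good phi" and lam: "lam > 1" and f: "mono f"
  shows "mono ((lpr_scheme phi lam ^^ k) f)"
proof (induction k)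
  case 0 then show ?case using f by simp
next
  case (Suc k) then show ?case by (simp add: mono_int_step step_le[OF g lam])
qed



lemma dyadic_conv: "(\<lambda>k::nat. real_of_int (floor (z * 2^k)) / 2^k) \<longlonglongrightarrow> (z::real)"
proof -
  define e where "e k = z - real_of_int (floor (z * 2^k)) / 2^k" for k :: nat
  have b: "0 \<le> e k \<and> e k \<le> (1/2)^k" for k
  proof -
    have p: "(0::real) < 2^k" by simp
    have f1: "real_of_int (floor (z * 2^k)) \<le> z * 2^k" by (rule of_int_floor_le)
    have f2: "z * 2^k < real_of_int (floor (z * 2^k)) + 1" by (rule real_of_int_floor_add_one_gt)
    have "real_of_int (floor (z * 2^k)) / 2^k \<le> z" using f1 p by (simp add: divide_le_eq)
    moreover have "z - real_of_int (floor (z * 2^k)) / 2^k \<le> 1 / 2^k"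
    proof -
      have "z \<le> (real_of_int (floor (z * 2^k)) + 1) / 2^k" using f2 p by (simp add: le_divide_eq)
      then show ?thesis by (simp add: add_divide_distrib)
    qed
    ultimately show ?thesis by (simp add: e_def power_one_over)
  qed
  have "e \<longlonglongrightarrow> 0"
  proof (rule tendsto_sandwich[of "\<lambda>_. 0" e sequentially "\<lambda>k. (1/2)^k"])
    show "\<forall>\<^sub>F n in sequentially. 0 \<le> e n" using b by simp
    show "\<forall>\<^sub>F n in sequentially. e n \<le> (1/2)^n" using b by simp
    show "((\<lambda>k. (1/2::real)^k) \<longlongrightarrow> 0) sequentially" by (rule LIMSEQ_realpow_zero) auto
  qed simp
  then have "(\<lambda>k. z - e k) \<longlonglongrightarrow> z - 0" by (intro tendsto_diff tendsto_const)
  then show ?thesis by (simp add: e_def)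
qed

theorem corollary4p7:
  fixes phi :: "real \<Rightarrow> real" and lam :: real
    and f0 :: "int \<Rightarrow> real" and F :: "real \<Rightarrow> real"
  assumes lam: "lam > 1" "lam \<notin> \<nat>"
    and phi: "phi = (\<lambda>x. 1) \<or> phi = (\<lambda>x. 1 - x) \<or> phi = (\<lambda>x. 1 - x ^ 2)
      \<or> phi = (\<lambda>x. (1 - x ^ 2) ^ 2) \<or> phi = (\<lambda>x. (1 - x ^ 3) ^ 3)
      \<or> phi = (\<lambda>x. (1 - x ^ 2) ^ 3) \<or> (\<exists>\<xi>>0. phi = (\<lambda>x. exp (- \<xi> * x)))"
    and bounded: "\<exists>B. \<forall>j. \<bar>f0 j\<bar> \<le> B"
    and nondec: "mono f0"
    and limit: "is_subdiv_limit (lpr_scheme phi lam) f0 F"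
  shows "mono F"
proof (rule monoI)
  fix x y :: real assume xy: "x \<le> y"
  have g: "good phi" by (rule good_phi[OF phi])
  define S where "S = lpr_scheme phi lam"
  have Sm: "\<And>k. mono ((S ^^ k) f0)" using iter_mono[OF g lam(1) nondec] S_def by simp
  from limit have cont: "continuous_on UNIV F"
    and U: "\<forall>\<epsilon>>0. \<exists>K. \<forall>k\<ge>K. \<forall>j::int. \<bar>(S ^^ k) f0 j - F (real_of_int j / 2 ^ k)\<bar> \<le> \<epsilon>"
    by (auto simp: is_subdiv_limit_def S_def)
  define jx where "jx k = floor (x * 2^k)" for k :: nat
  define jy where "jy k = floor (y * 2^k)" for k :: nat
  have ic: "isCont F z" for z using cont by (simp add: continuous_on_eq_continuous_at)
  have ax: "(\<lambda>k. F (real_of_int (jx k) / 2^k)) \<longlonglongrightarrow> F x"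
    unfolding jx_def by (rule isCont_tendsto_compose[OF ic dyadic_conv])
  have ay: "(\<lambda>k. F (real_of_int (jy k) / 2^k)) \<longlonglongrightarrow> F y"
    unfolding jy_def by (rule isCont_tendsto_compose[OF ic dyadic_conv])
  have jxy: "jx k \<le> jy k" for k unfolding jx_def jy_def
    by (intro floor_mono mult_right_mono xy) simp
  have eps: "F x - F y \<le> 2 * \<epsilon>" if ep: "\<epsilon> > 0" for \<epsilon>
  proof -
    obtain K where K: "\<And>k j. k \<ge> K \<Longrightarrow> \<bar>(S ^^ k) f0 j - F (real_of_int j / 2 ^ k)\<bar> \<le> \<epsilon>"
      using U ep by blast
    have ev: "\<exists>N. \<forall>n\<ge>N. F (real_of_int (jx n) / 2^n) - F (real_of_int (jy n) / 2^n) \<le> 2 * \<epsilon>"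
    proof (intro exI allI impI)
      fix n assume n: "n \<ge> K"
      have "(S ^^ n) f0 (jx n) \<le> (S ^^ n) f0 (jy n)" using Sm[of n] jxy[of n] by (simp add: mono_def)
      then show "F (real_of_int (jx n) / 2^n) - F (real_of_int (jy n) / 2^n) \<le> 2 * \<epsilon>"
        using K[OF n, of "jx n"] K[OF n, of "jy n"] by linarith
    qed
    show ?thesis using LIMSEQ_le[OF tendsto_diff[OF ax ay] tendsto_const ev] .
  qed
  show "F x \<le> F y"
  proof (rule ccontr)
    assume "\<not> F x \<le> F y"
    then have this0: "(F x - F y) / 4 > 0" by simp
    have "2 * ((F x - F y) / 4) = (F x - F y) / 2" by simp
    with eps[OF this0] show False using \<open>\<not> F x \<le> F y\<close> by (auto simp: field_simps)
  qed
qed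

end
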